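(* Fix $y_0\in[-1,1]$ and let $\mathfrak h_N(t)=N^{-(1+\alpha)}\mathfrak h(t,[Ny_0])$. For any initial configurations $\eta$, $$\lim_{L\to\infty}\lim_{N\to\infty}\frac{1}{N^{1+\alpha}}\log P_\eta\Big(\sup_{0\le t\le T}|\mathfrak h_N(t)|\ge L\Big)=-\infty.$$
   Context: Fix $\alpha>0$, $T>0$, $a\in(0,1/2)$ and $C^1$ functions $\rho_\pm:[0,T]\to[a,1-a]$. For $N\ge1$, $\Lambda_N=\{-N,\dots,N\}$, configurations $\eta\in\{0,1\}^{\Lambda_N}$. The process $(\eta_t)$ is the time-inhomogeneous Markov process with generator $L_{N,t}=N^{2+\alpha}(L_{\rm exc}+L_{b,t})$, $L_{\rm exc}f(\eta)=\sum_{x=-N}^{N-1}[f(\eta^{(x,x+1)})-f(\eta)]$, $L_{b,t}f(\eta)=\sum_{\sigma=\pm}\rho_\sigma(t)^{1-\eta(\sigma N)}(1-\rho_\sigma(t))^{\eta(\sigma N)}[f(\eta^{\sigma N})-f(\eta)]$ ($\eta^{(x,x+1)}$ exchanges occupations at $x,x+1$, $\eta^z$ flips the occupation at $z$); $P_\eta$ is its law started from $\eta$. For $x=-N-1,\dots,N$, $\mathfrak h(t,x)=\mathfrak h_+(t,x)-\mathfrak h_-(t,x)$, where $\mathfrak h_+(t,x)$ counts jumps from $x$ to $x+1$ during $[0,t]$ and $\mathfrak h_-(t,x)$ jumps from $x+1$ to $x$ (at $x=-N-1$ these are creations/annihilations at site $-N$, at $x=N$ annihilations/creations at site $N$). *)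

theory Defs
  imports "HOL-Probability.Probability"
begin

type_synonym config = "int \<Rightarrow> bool"
type_synonym mark = "real \<times> nat \<times> real"

text \<open>Uniformised (graphical) construction of the process with generator
  N^(2+alpha) (L_exc + L_b,t).  Events occur at the jumps of a Poisson process of
  total rate R_N = N^(2+alpha) (2N+2).  Each event carries a mark m, uniform in
  {0..2N+1}: m < 2N is the exchange clock of the bond (x,x+1), x = -N+m;
  m = 2N is the boundary clock at -N, m = 2N+1 the boundary clock at N.  A
  boundary clock is accepted (thinning) iff u < (flip rate at current time),
  u uniform on [0,1].\<close>

definition total_rate :: "real \<Rightarrow> nat \<Rightarrow> real" where
  "total_rate \<alpha> N = real N powr (2 + \<alpha>) * (2 * real N + 2)"

definition step_meas :: "real \<Rightarrow> nat \<Rightarrow> mark measure" where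
  "step_meas \<alpha> N =
     density lborel (\<lambda>x. ennreal (exponential_density (total_rate \<alpha> N) x))
     \<Otimes>\<^sub>M (measure_pmf (pmf_of_set {0..<2*N+2})
     \<Otimes>\<^sub>M uniform_measure lborel {0..1::real})"

definition flip_rate :: "real \<Rightarrow> bool \<Rightarrow> real" where
  "flip_rate r b = (if b then 1 - r else r)"

definition swap_cfg :: "config \<Rightarrow> int \<Rightarrow> config" where
  "swap_cfg \<eta> x = \<eta>(x := \<eta> (x+1), x+1 := \<eta> x)"

text \<open>one event at time t with mark (m,u), updating configuration and
  the currents h(x), x = -N-1..N\<close>
definition upd :: "(real \<Rightarrow> real) \<Rightarrow> (real \<Rightarrow> real) \<Rightarrow> nat \<Rightarrow> real \<Rightarrow> nat \<Rightarrow> real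
     \<Rightarrow> config \<times> (int \<Rightarrow> int) \<Rightarrow> config \<times> (int \<Rightarrow> int)" where
  "upd \<rho>m \<rho>p N t m u s =
    (case s of (\<eta>, h) \<Rightarrow>
     if m < 2*N then
       (let x = - int N + int m in
        (swap_cfg \<eta> x,
         h(x := h x + (if \<eta> x \<and> \<not> \<eta> (x+1) then 1
                       else if \<not> \<eta> x \<and> \<eta> (x+1) then -1 else 0))))
     else if m = 2*N then
       (let z = - int N in
        if u < flip_rate (\<rho>m t) (\<eta> z)
        then (\<eta>(z := \<not> \<eta> z), h(z - 1 := h (z - 1) + (if \<eta> z then -1 else 1)))
        else (\<eta>, h))
     else
       (let z = int N in
        if u < flip_rate (\<rho>p t) (\<eta> z)
        then (\<eta>(z := \<not> \<eta> z), h(z := h z + (if \<eta> z then 1 else -1)))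
        else (\<eta>, h)))"

primrec evolve :: "(real \<Rightarrow> real) \<Rightarrow> (real \<Rightarrow> real) \<Rightarrow> nat \<Rightarrow> config \<Rightarrow> mark stream
     \<Rightarrow> nat \<Rightarrow> real \<times> config \<times> (int \<Rightarrow> int)" where
  "evolve \<rho>m \<rho>p N \<eta> \<omega> 0 = (0, \<eta>, \<lambda>_. 0)"
| "evolve \<rho>m \<rho>p N \<eta> \<omega> (Suc k) =
    (case evolve \<rho>m \<rho>p N \<eta> \<omega> k of (t, s) \<Rightarrow>
      (case \<omega> !! k of (\<tau>, m, u) \<Rightarrow>
        (t + \<tau>, upd \<rho>m \<rho>p N (t + \<tau>) m u s)))"

text \<open>the current h(t,x) at time t: value after the last event with time \<le> t\<close>
definition current :: "(real \<Rightarrow> real) \<Rightarrow> (real \<Rightarrow> real) \<Rightarrow> nat \<Rightarrow> config \<Rightarrow> mark stream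
     \<Rightarrow> real \<Rightarrow> int \<Rightarrow> int" where
  "current \<rho>m \<rho>p N \<eta> \<omega> t x =
     snd (snd (evolve \<rho>m \<rho>p N \<eta> \<omega>
       (LEAST k. fst (evolve \<rho>m \<rho>p N \<eta> \<omega> (Suc k)) > t))) x"

definition height_prob :: "real \<Rightarrow> real \<Rightarrow> (real \<Rightarrow> real) \<Rightarrow> (real \<Rightarrow> real) \<Rightarrow> real
     \<Rightarrow> nat \<Rightarrow> config \<Rightarrow> real \<Rightarrow> real" where
  "height_prob \<alpha> T \<rho>m \<rho>p y0 N \<eta> L =
     measure (stream_space (step_meas \<alpha> N))
       {\<omega> \<in> space (stream_space (step_meas \<alpha> N)).
          \<exists>t\<in>{0..T}. \<bar>real_of_int (current \<rho>m \<rho>p N \<eta> \<omega> t \<lfloor>real N * y0\<rfloor>)\<bar>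
                        / real N powr (1 + \<alpha>) \<ge> L}"

definition ln_ereal :: "real \<Rightarrow> ereal" where
  "ln_ereal p = (if p > 0 then ereal (ln p) else -\<infinity>)"

end

theory Submission
  imports Defs
begin


type_synonym state = "real \<times> config \<times> (int \<Rightarrow> int)"

definition st :: "(real \<Rightarrow> real) \<Rightarrow> (real \<Rightarrow> real) \<Rightarrow> nat \<Rightarrow> state \<Rightarrow> mark \<Rightarrow> state" where
  "st \<rho>m \<rho>p N s x = (case s of (t, c) \<Rightarrow> case x of (\<tau>, m, u) \<Rightarrow> (t + \<tau>, upd \<rho>m \<rho>p N (t + \<tau>) m u c))"

primrec ev :: "(real \<Rightarrow> real) \<Rightarrow> (real \<Rightarrow> real) \<Rightarrow> nat \<Rightarrow> state \<Rightarrow> mark stream \<Rightarrow> nat \<Rightarrow> state" where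
  "ev \<rho>m \<rho>p N s \<omega> 0 = s"
| "ev \<rho>m \<rho>p N s \<omega> (Suc k) = ev \<rho>m \<rho>p N (st \<rho>m \<rho>p N s (shd \<omega>)) (stl \<omega>) k"

lemma ev_Suc': "ev \<rho>m \<rho>p N s \<omega> (Suc k) = st \<rho>m \<rho>p N (ev \<rho>m \<rho>p N s \<omega> k) (\<omega> !! k)"
  by (induction k arbitrary: s \<omega>) auto

lemma evolve_ev: "evolve \<rho>m \<rho>p N \<eta> \<omega> k = ev \<rho>m \<rho>p N (0, \<eta>, \<lambda>_. 0) \<omega> k"
proof (induction k)
  case 0 then show ?case by simp
next
  case (Suc k)
  show ?case unfolding ev_Suc' evolve.simps Suc[symmetric]
    by (simp add: st_def split: prod.splits)
qed

definition invp :: "nat \<Rightarrow> config \<Rightarrow> config \<times> (int \<Rightarrow> int) \<Rightarrow> bool" where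
  "invp N \<eta>0 c = (\<forall>x. - int N \<le> x \<and> x \<le> int N \<longrightarrow>
      snd c x - snd c (x - 1) = of_bool (\<eta>0 x) - of_bool (fst c x))"

lemma invp_upd:
  assumes "invp N \<eta>0 c"
  shows "invp N \<eta>0 (upd \<rho>m \<rho>p N t m u c)"
proof -
  obtain \<eta> h where c: "c = (\<eta>, h)" by (cases c)
  show ?thesis
  proof (cases "m < 2*N")
    case True
    define x where "x = - int N + int m"
    have x: "- int N \<le> x" "x < int N" using True by (auto simp: x_def)
    have H: "h y - h (y - 1) = of_bool (\<eta>0 y) - of_bool (\<eta> y)" if "- int N \<le> y" "y \<le> int N" for y
      using assms that unfolding c invp_def by auto
    show ?thesis unfolding c upd_def invp_def Let_def x_def[symmetric] using True
      apply (simp only: prod.case fst_conv snd_conv if_True)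
      apply (intro allI impI)
      subgoal for y using H[of x] H[of "x+1"] H[of y] x
        by (cases "y = x"; cases "y = x+1"; auto simp: swap_cfg_def)
      done
  next
    case False
    then show ?thesis using assms unfolding c upd_def invp_def Let_def
      by (auto split: if_splits)
  qed
qed

lemma invp_ev:
  assumes "invp N \<eta>0 (snd s)"
  shows "invp N \<eta>0 (snd (ev \<rho>m \<rho>p N s \<omega> k))"
  using assms
proof (induction k)
  case 0 then show ?case by simp
next
  case (Suc k) then show ?case
    unfolding ev_Suc' by (auto simp: st_def invp_upd split: prod.splits)
qed

lemma lip1:
  assumes "invp N \<eta>0 (\<eta>, h)" "- int N - 1 \<le> a" "a \<le> b" "b \<le> int N"
  shows "\<bar>h b - h a\<bar> \<le> b - a"
proof -
  have "b \<le> int N \<longrightarrow> \<bar>h b - h a\<bar> \<le> b - a"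
    using assms(3)
  proof (induction b rule: int_ge_induct)
    case base then show ?case by simp
  next
    case (step i)
    show ?case
    proof
      assume i: "i + 1 \<le> int N"
      have "h (i+1) - h i = of_bool (\<eta>0 (i+1)) - of_bool (\<eta> (i+1))"
        using assms(1,2) step.hyps i unfolding invp_def by (auto dest!: spec[of _ "i+1"])
      then have "\<bar>h (i+1) - h i\<bar> \<le> 1" by auto
      then show "\<bar>h (i + 1) - h a\<bar> \<le> i + 1 - a" using step i by linarith
    qed
  qed
  then show ?thesis using assms by simp
qed

lemma lip2:
  assumes "invp N \<eta>0 (\<eta>, h)" "- int N - 1 \<le> a" "a \<le> int N" "- int N - 1 \<le> b" "b \<le> int N"
  shows "\<bar>h a - h b\<bar> \<le> 2 * int N + 1"
proof (cases "a \<le> b")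
  case True then show ?thesis using lip1[OF assms(1,2) True assms(5)] assms by linarith
next
  case False then show ?thesis using lip1[OF assms(1,4) _ assms(3)] assms by linarith
qed

definition Ssum :: "nat \<Rightarrow> (int \<Rightarrow> int) \<Rightarrow> int" where
  "Ssum N h = (\<Sum>y\<in>{- int N - 1..int N}. h y)"

lemma card_II: "card {- int N - 1..int N} = 2 * N + 2"
  by simp

lemma Sbound:
  assumes "invp N \<eta>0 (\<eta>, h)" "- int N - 1 \<le> x0" "x0 \<le> int N"
  shows "\<bar>(2 * int N + 2) * h x0 - Ssum N h\<bar> \<le> (2 * int N + 2) * (2 * int N + 1)"
proof -
  have "(2 * int N + 2) * h x0 - Ssum N h = (\<Sum>y\<in>{- int N - 1..int N}. h x0 - h y)"
    unfolding Ssum_def sum_subtractf by simp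
  also have "\<bar>\<dots>\<bar> \<le> (\<Sum>y\<in>{- int N - 1..int N}. \<bar>h x0 - h y\<bar>)" by (rule sum_abs)
  also have "\<dots> \<le> (\<Sum>y\<in>{- int N - 1..int N}. 2 * int N + 1)"
    by (intro sum_mono lip2[OF assms(1,2,3)]) auto
  also have "\<dots> = (2 * int N + 2) * (2 * int N + 1)" by simp
  finally show ?thesis .
qed

lemma exp_quad:
  fixes y :: real assumes "\<bar>y\<bar> \<le> 1" shows "exp y \<le> 1 + y + y^2"
proof (cases "y \<ge> 0")
  case True then show ?thesis using exp_bound[of y] assms by auto
next
  case False
  define z where "z = - y"
  have z: "0 \<le> z" "z \<le> 1" using False assms by (auto simp: z_def)
  have zz: "0 \<le> z * z" by simp
  have pos: "1 - z + z^2 > 0"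
  proof (cases "z < 1")
    case True then show ?thesis using zero_le_power2[of z] by linarith
  next
    case False then have "z = 1" using z by simp
    then show ?thesis by simp
  qed
  have "1 \<le> (1 + z) * (1 - z + z^2)" using z by (simp add: algebra_simps power2_eq_square power3_eq_cube)
  also have "\<dots> \<le> exp z * (1 - z + z^2)" using pos exp_ge_add_one_self[of z] by (intro mult_right_mono) auto
  finally have "1 / exp z \<le> 1 - z + z^2" by (simp add: field_simps)
  then show ?thesis by (simp add: z_def exp_minus field_simps)
qed

lemma onestep_real:
  fixes \<phi> :: real and q dA dR :: "nat \<Rightarrow> real"
  assumes "\<bar>\<phi>\<bar> \<le> 1" "\<And>m. m < n \<Longrightarrow> 0 \<le> q m \<and> q m \<le> 1"
    "\<And>m. m < n \<Longrightarrow> \<bar>dA m\<bar> \<le> 1 \<and> \<bar>dR m\<bar> \<le> 1"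
    "\<bar>\<Sum>m<n. q m * dA m + (1 - q m) * dR m\<bar> \<le> 1"
  shows "(\<Sum>m<n. q m * exp (\<phi> * dA m) + (1 - q m) * exp (\<phi> * dR m)) \<le> real n * (1 + \<phi>^2) + \<bar>\<phi>\<bar>"
proof -
  have e: "exp (\<phi> * d) \<le> 1 + \<phi> * d + \<phi>^2" if "\<bar>d\<bar> \<le> 1" for d
  proof -
    have a: "\<bar>\<phi> * d\<bar> \<le> 1" using assms(1) that by (simp add: abs_mult mult_le_one)
    have "d^2 \<le> 1" using that by (simp add: abs_square_le_1)
    then have "(\<phi> * d)^2 \<le> \<phi>^2" by (simp add: power_mult_distrib mult_left_le)
    then show ?thesis using exp_quad[OF a] by linarith
  qed
  have "(\<Sum>m<n. q m * exp (\<phi> * dA m) + (1 - q m) * exp (\<phi> * dR m))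
      \<le> (\<Sum>m<n. q m * (1 + \<phi> * dA m + \<phi>^2) + (1 - q m) * (1 + \<phi> * dR m + \<phi>^2))"
  proof (rule sum_mono)
    fix m assume "m \<in> {..<n}"
    then have m: "m < n" by simp
    have 1: "exp (\<phi> * dA m) \<le> 1 + \<phi> * dA m + \<phi>^2" using e assms(3)[OF m] by blast
    have 2: "exp (\<phi> * dR m) \<le> 1 + \<phi> * dR m + \<phi>^2" using e assms(3)[OF m] by blast
    have 3: "0 \<le> q m" "0 \<le> 1 - q m" using assms(2)[OF m] by auto
    show "q m * exp (\<phi> * dA m) + (1 - q m) * exp (\<phi> * dR m)
      \<le> q m * (1 + \<phi> * dA m + \<phi>^2) + (1 - q m) * (1 + \<phi> * dR m + \<phi>^2)"
      by (intro add_mono mult_left_mono 1 2 3)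
  qed
  also have "\<dots> = (\<Sum>m<n. (1 + \<phi>^2) + \<phi> * (q m * dA m + (1 - q m) * dR m))"
    by (intro sum.cong) (auto simp: algebra_simps)
  also have "\<dots> = real n * (1 + \<phi>^2) + \<phi> * (\<Sum>m<n. q m * dA m + (1 - q m) * dR m)"
    by (simp add: sum.distrib sum_distrib_left distrib_left)
  also have "\<dots> \<le> real n * (1 + \<phi>^2) + \<bar>\<phi>\<bar>"
  proof -
    define X where "X = (\<Sum>m<n. q m * dA m + (1 - q m) * dR m)"
    have "\<phi> * X \<le> \<bar>\<phi> * X\<bar>" by simp
    also have "\<dots> = \<bar>\<phi>\<bar> * \<bar>X\<bar>" by (simp add: abs_mult)
    also have "\<dots> \<le> \<bar>\<phi>\<bar> * 1" using assms(4) unfolding X_def by (intro mult_left_mono) auto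
    finally have "\<phi> * (\<Sum>m<n. q m * dA m + (1 - q m) * dR m) \<le> \<bar>\<phi>\<bar> * 1" unfolding X_def .
    then show ?thesis by simp
  qed
  finally show ?thesis .
qed

definition pp :: "(real \<Rightarrow> real) \<Rightarrow> (real \<Rightarrow> real) \<Rightarrow> nat \<Rightarrow> state \<Rightarrow> real \<Rightarrow> nat \<Rightarrow> real" where
  "pp \<rho>m \<rho>p N s \<tau> m = (case s of (t, \<eta>, h) \<Rightarrow> if m < 2*N then 0 else if m = 2*N
     then flip_rate (\<rho>m (t+\<tau>)) (\<eta> (- int N)) else flip_rate (\<rho>p (t+\<tau>)) (\<eta> (int N)))"

lemma st_split: "st \<rho>m \<rho>p N s (\<tau>, m, u) = (if u < pp \<rho>m \<rho>p N s \<tau> m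
   then st \<rho>m \<rho>p N s (\<tau>, m, pp \<rho>m \<rho>p N s \<tau> m - 1) else st \<rho>m \<rho>p N s (\<tau>, m, pp \<rho>m \<rho>p N s \<tau> m))"
  by (cases s) (auto simp: st_def pp_def upd_def Let_def)

lemma fst_st: "fst (st \<rho>m \<rho>p N s (\<tau>, m, u)) = fst s + \<tau>"
  by (cases s) (auto simp: st_def)

definition dl :: "config \<Rightarrow> nat \<Rightarrow> nat \<Rightarrow> int" where
  "dl \<eta> N m = (let x = - int N + int m in
     if \<eta> x \<and> \<not> \<eta> (x+1) then 1 else if \<not> \<eta> x \<and> \<eta> (x+1) then -1 else 0)"
definition dA :: "config \<Rightarrow> nat \<Rightarrow> nat \<Rightarrow> int" where
  "dA \<eta> N m = (if m < 2*N then dl \<eta> N m else if m = 2*N then (if \<eta> (- int N) then -1 else 1)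
     else (if \<eta> (int N) then 1 else -1))"
definition dR :: "config \<Rightarrow> nat \<Rightarrow> nat \<Rightarrow> int" where
  "dR \<eta> N m = (if m < 2*N then dl \<eta> N m else 0)"

lemma Ssum_upd:
  assumes "- int N - 1 \<le> x" "x \<le> int N"
  shows "Ssum N (h(x := v)) = Ssum N h - h x + v"
proof -
  let ?A = "{- int N - 1..int N}"
  have x: "x \<in> ?A" using assms by auto
  have "Ssum N (h(x := v)) = (h(x := v)) x + sum (h(x := v)) (?A - {x})"
    unfolding Ssum_def using x by (simp add: sum.remove)
  also have "sum (h(x := v)) (?A - {x}) = sum h (?A - {x})" by (intro sum.cong) auto
  also have "Ssum N h = h x + sum h (?A - {x})" unfolding Ssum_def using x by (simp add: sum.remove)
  ultimately show ?thesis by (simp add: fun_upd_def algebra_simps)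
qed

lemma S_acc:
  assumes "m < 2*N+2"
  shows "Ssum N (snd (snd (st \<rho>m \<rho>p N s (\<tau>, m, pp \<rho>m \<rho>p N s \<tau> m - 1))))
       = Ssum N (snd (snd s)) + dA (fst (snd s)) N m"
proof -
  obtain t \<eta> h where s: "s = (t, \<eta>, h)" by (cases s)
  consider "m < 2*N" | "m = 2*N" | "m = 2*N+1" using assms by linarith
  then show ?thesis
  proof cases
    case 1 then show ?thesis unfolding s
      by (simp add: st_def pp_def upd_def Let_def dA_def dl_def Ssum_upd)
  next
    case 2 then show ?thesis unfolding s
      by (simp add: st_def pp_def upd_def Let_def dA_def Ssum_upd)
  next
    case 3 then show ?thesis unfolding s
      by (simp add: st_def pp_def upd_def Let_def dA_def Ssum_upd)
  qed
qed

lemma S_rej: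
  assumes "m < 2*N+2"
  shows "Ssum N (snd (snd (st \<rho>m \<rho>p N s (\<tau>, m, pp \<rho>m \<rho>p N s \<tau> m))))
       = Ssum N (snd (snd s)) + dR (fst (snd s)) N m"
proof -
  obtain t \<eta> h where s: "s = (t, \<eta>, h)" by (cases s)
  consider "m < 2*N" | "m = 2*N" | "m = 2*N+1" using assms by linarith
  then show ?thesis
  proof cases
    case 1 then show ?thesis unfolding s
      by (simp add: st_def pp_def upd_def Let_def dR_def dl_def Ssum_upd)
  next
    case 2 then show ?thesis unfolding s
      by (simp add: st_def pp_def upd_def Let_def dR_def)
  next
    case 3 then show ?thesis unfolding s
      by (simp add: st_def pp_def upd_def Let_def dR_def)
  qed
qed

lemma drift:
  fixes q :: "nat \<Rightarrow> real"
  assumes "\<And>m. 0 \<le> q m \<and> q m \<le> 1"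
  shows "\<bar>\<Sum>m<2*N+2. q m * dA \<eta> N m + (1 - q m) * dR \<eta> N m\<bar> \<le> 1"
proof -
  define b where "b x = (if \<eta> x then 1 else 0 :: real)" for x
  define c where "c m = b (- int N + int m)" for m
  have dl: "real_of_int (dl \<eta> N m) = c m - c (Suc m)" for m
    by (simp add: dl_def c_def b_def Let_def add_ac)
  have "(\<Sum>m<2*N+2. q m * dA \<eta> N m + (1 - q m) * dR \<eta> N m)
     = (\<Sum>m<2*N. q m * dA \<eta> N m + (1 - q m) * dR \<eta> N m)
       + (q (2*N) * dA \<eta> N (2*N) + (1 - q (2*N)) * dR \<eta> N (2*N))
       + (q (2*N+1) * dA \<eta> N (2*N+1) + (1 - q (2*N+1)) * dR \<eta> N (2*N+1))"
    by (simp add: numeral_2_eq_2)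
  also have "(\<Sum>m<2*N. q m * dA \<eta> N m + (1 - q m) * dR \<eta> N m) = (\<Sum>m<2*N. c m - c (Suc m))"
    by (intro sum.cong) (auto simp: dA_def dR_def dl algebra_simps)
  also have "\<dots> = c 0 - c (2*N)" by (rule sum_lessThan_telescope')
  also have "c 0 = b (- int N)" by (simp add: c_def)
  also have "c (2*N) = b (int N)" by (simp add: c_def)
  finally have eq: "(\<Sum>m<2*N+2. q m * dA \<eta> N m + (1 - q m) * dR \<eta> N m) =
     b (- int N) - b (int N) + q (2*N) * (if \<eta> (- int N) then -1 else 1)
       + q (2*N+1) * (if \<eta> (int N) then 1 else -1)"
    by (simp add: dA_def dR_def)
  show ?thesis unfolding eq using assms[of "2*N"] assms[of "2*N+1"]
    by (auto simp: b_def)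
qed


lemma nn_integral_le_by_meas:
  assumes "\<And>g. g \<in> borel_measurable M \<Longrightarrow> (\<And>x. g x \<le> f x) \<Longrightarrow> integral\<^sup>N M g \<le> C"
  shows "integral\<^sup>N M f \<le> C"
  unfolding nn_integral_def
proof (rule SUP_least)
  fix g assume "g \<in> {g. simple_function M g \<and> g \<le> f}"
  then have g: "simple_function M g" "g \<le> f" by auto
  have "integral\<^sup>S M g = integral\<^sup>N M g" using g(1) by (simp add: nn_integral_eq_simple_integral)
  also have "\<dots> \<le> C" using assms[of g] g borel_measurable_simple_function by (auto simp: le_fun_def)
  finally show "integral\<^sup>S M g \<le> C" .
qed

lemma (in prob_space) stream_le:
  "(\<integral>\<^sup>+\<omega>. f \<omega> \<partial>stream_space M) \<le> (\<integral>\<^sup>+x. \<integral>\<^sup>+\<omega>. f (x ## \<omega>) \<partial>stream_space M \<partial>M)"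
proof (rule nn_integral_le_by_meas)
  fix g assume g: "g \<in> borel_measurable (stream_space M)" "\<And>x. g x \<le> f x"
  have "integral\<^sup>N (stream_space M) g = (\<integral>\<^sup>+x. \<integral>\<^sup>+\<omega>. g (x ## \<omega>) \<partial>stream_space M \<partial>M)"
    using nn_integral_stream_space[OF g(1)] .
  also have "\<dots> \<le> (\<integral>\<^sup>+x. \<integral>\<^sup>+\<omega>. f (x ## \<omega>) \<partial>stream_space M \<partial>M)"
    by (intro nn_integral_mono g(2))
  finally show "integral\<^sup>N (stream_space M) g \<le> \<dots>" .
qed

lemma pair_le:
  assumes "sigma_finite_measure B"
  shows "(\<integral>\<^sup>+z. f z \<partial>(A \<Otimes>\<^sub>M B)) \<le> (\<integral>\<^sup>+a. \<integral>\<^sup>+b. f (a,b) \<partial>B \<partial>A)"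
proof (rule nn_integral_le_by_meas)
  fix g assume g: "g \<in> borel_measurable (A \<Otimes>\<^sub>M B)" "\<And>x. g x \<le> f x"
  have "integral\<^sup>N (A \<Otimes>\<^sub>M B) g = (\<integral>\<^sup>+a. \<integral>\<^sup>+b. g (a,b) \<partial>B \<partial>A)"
    using sigma_finite_measure.nn_integral_fst[OF assms g(1)] by simp
  also have "\<dots> \<le> (\<integral>\<^sup>+a. \<integral>\<^sup>+b. f (a,b) \<partial>B \<partial>A)"
    by (intro nn_integral_mono g(2))
  finally show "integral\<^sup>N (A \<Otimes>\<^sub>M B) g \<le> \<dots>" .
qed

lemma (in prob_space) const_add_le:
  "(\<integral>\<^sup>+x. c + f x \<partial>M) \<le> c + (\<integral>\<^sup>+x. f x \<partial>M)"
proof (cases "c = top")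
  case True then show ?thesis by simp
next
  case False
  show ?thesis
  proof (rule nn_integral_le_by_meas)
    fix g assume g: "g \<in> borel_measurable M" "\<And>x. g x \<le> c + f x"
    have m: "(\<lambda>x. g x - c) \<in> borel_measurable M" using g(1) by measurable
    have "integral\<^sup>N M g \<le> (\<integral>\<^sup>+x. c + (g x - c) \<partial>M)"
    proof (intro nn_integral_mono)
      fix x
      have "g x \<le> g x - c + c" by (auto simp: diff_add_self_ennreal not_le intro: less_imp_le)
      then show "g x \<le> c + (g x - c)" by (simp add: add.commute)
    qed
    also have "\<dots> = c + (\<integral>\<^sup>+x. (g x - c) \<partial>M)"
      using m by (subst nn_integral_add) (auto simp: emeasure_space_1)
    also have "\<dots> \<le> c + (\<integral>\<^sup>+x. f x \<partial>M)"
    proof (intro add_left_mono nn_integral_mono)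
      fix x show "g x - c \<le> f x" using g(2)[of x] False by (simp add: ennreal_minus_le_iff)
    qed
    finally show "integral\<^sup>N M g \<le> c + (\<integral>\<^sup>+x. f x \<partial>M)" .
  qed
qed


abbreviation U01 :: "real measure" where "U01 \<equiv> uniform_measure lborel {0..1::real}"

lemma prob_U01: "prob_space U01"
  by (rule prob_space_uniform_measure) auto

definition clmp :: "real \<Rightarrow> real" where "clmp p = max 0 (min 1 p)"

lemma clmp_bounds: "0 \<le> clmp p" "clmp p \<le> 1" by (auto simp: clmp_def)

lemma em_lt: "emeasure lborel ({0..1} \<inter> {..<p}) = ennreal (clmp p)"
proof -
  consider "p \<le> 0" | "0 < p" "p \<le> 1" | "p > 1" by linarith
  then show ?thesis
  proof cases
    case 1 then have "{0..1} \<inter> {..<p} = ({}::real set)" by auto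
    then show ?thesis using 1 by (simp add: clmp_def)
  next
    case 2 then have "{0..1} \<inter> {..<p} = {0..<p}" by auto
    then show ?thesis using 2 by (simp add: clmp_def)
  next
    case 3 then have "{0..1} \<inter> {..<p} = {0..1::real}" by auto
    then show ?thesis using 3 by (simp add: clmp_def)
  qed
qed

lemma em_ge: "emeasure lborel ({0..1} \<inter> {p..}) = ennreal (1 - clmp p)"
proof -
  consider "p \<le> 0" | "0 < p" "p \<le> 1" | "p > 1" by linarith
  then show ?thesis
  proof cases
    case 1 then have "{0..1} \<inter> {p..} = {0..1::real}" by auto
    then show ?thesis using 1 by (simp add: clmp_def)
  next
    case 2 then have "{0..1} \<inter> {p..} = {p..1}" by auto
    then show ?thesis using 2 by (simp add: clmp_def)
  next
    case 3 then have "{0..1} \<inter> {p..} = ({}::real set)" by auto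
    then show ?thesis using 3 by (simp add: clmp_def)
  qed
qed

lemma unif_if:
  "(\<integral>\<^sup>+u. (if u < p then a else b) \<partial>U01) = a * ennreal (clmp p) + b * ennreal (1 - clmp p)"
proof -
  have m: "(\<lambda>u::real. if u < p then a else b) \<in> borel_measurable lborel" by measurable
  have "(\<integral>\<^sup>+u. (if u < p then a else b) \<partial>U01)
     = (\<integral>\<^sup>+u. (if u < p then a else b) * indicator {0..1} u \<partial>lborel) / emeasure lborel {0..1::real}"
    by (rule nn_integral_uniform_measure[OF m]) simp
  also have "emeasure lborel {0..1::real} = 1" by simp
  also have "(\<lambda>u. (if u < p then a else b) * indicator {0..1} u)
     = (\<lambda>u. a * indicator ({0..1} \<inter> {..<p}) u + b * indicator ({0..1} \<inter> {p..}) u)"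
    by (auto simp: fun_eq_iff split: split_indicator)
  also have "(\<integral>\<^sup>+u. a * indicator ({0..1} \<inter> {..<p}) u + b * indicator ({0..1::real} \<inter> {p..}) u \<partial>lborel)
     = a * emeasure lborel ({0..1} \<inter> {..<p}) + b * emeasure lborel ({0..1} \<inter> {p..})"
    by (subst nn_integral_add) (auto simp: nn_integral_cmult_indicator)
  finally show ?thesis unfolding em_lt em_ge by (simp add: divide_ennreal_def)
qed

lemma prob_step: "total_rate \<alpha> N > 0 \<Longrightarrow> prob_space (step_meas \<alpha> N)"
  unfolding step_meas_def
  by (intro prob_space_pair prob_space_exponential_density prob_U01 prob_space_measure_pmf)

lemma sf_PU: "sigma_finite_measure (measure_pmf (pmf_of_set {0..<2*N+2}) \<Otimes>\<^sub>M U01)"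
proof -
  have "prob_space (measure_pmf (pmf_of_set {0..<2*N+2}) \<Otimes>\<^sub>M U01)"
    by (intro prob_space_pair prob_U01 prob_space_measure_pmf)
  then show ?thesis by (simp add: prob_space_imp_sigma_finite)
qed

lemma onestep_general:
  fixes F :: "state \<Rightarrow> ennreal"
  shows "(\<integral>\<^sup>+x. F (st \<rho>m \<rho>p N s x) \<partial>step_meas \<alpha> N) \<le>
    (\<integral>\<^sup>+\<tau>. (\<Sum>m\<in>{0..<2*N+2}. F (st \<rho>m \<rho>p N s (\<tau>, m, pp \<rho>m \<rho>p N s \<tau> m - 1)) * ennreal (clmp (pp \<rho>m \<rho>p N s \<tau> m))
        + F (st \<rho>m \<rho>p N s (\<tau>, m, pp \<rho>m \<rho>p N s \<tau> m)) * ennreal (1 - clmp (pp \<rho>m \<rho>p N s \<tau> m))) / ennreal (2 * real N + 2)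
       \<partial>density lborel (\<lambda>x. ennreal (exponential_density (total_rate \<alpha> N) x)))"
proof -
  let ?P = "measure_pmf (pmf_of_set {0..<2*N+2})"
  let ?D = "density lborel (\<lambda>x. ennreal (exponential_density (total_rate \<alpha> N) x))"
  have "(\<integral>\<^sup>+x. F (st \<rho>m \<rho>p N s x) \<partial>step_meas \<alpha> N) \<le>
      (\<integral>\<^sup>+\<tau>. \<integral>\<^sup>+z. F (st \<rho>m \<rho>p N s (\<tau>, z)) \<partial>(?P \<Otimes>\<^sub>M U01) \<partial>?D)"
    unfolding step_meas_def by (rule pair_le[OF sf_PU])
  also have "\<dots> \<le> (\<integral>\<^sup>+\<tau>. \<integral>\<^sup>+m. \<integral>\<^sup>+u. F (st \<rho>m \<rho>p N s (\<tau>, m, u)) \<partial>U01 \<partial>?P \<partial>?D)"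
    by (intro nn_integral_mono pair_le prob_space_imp_sigma_finite prob_U01)
  also have "\<dots> = (\<integral>\<^sup>+\<tau>. (\<Sum>m\<in>{0..<2*N+2}. F (st \<rho>m \<rho>p N s (\<tau>, m, pp \<rho>m \<rho>p N s \<tau> m - 1)) * ennreal (clmp (pp \<rho>m \<rho>p N s \<tau> m))
        + F (st \<rho>m \<rho>p N s (\<tau>, m, pp \<rho>m \<rho>p N s \<tau> m)) * ennreal (1 - clmp (pp \<rho>m \<rho>p N s \<tau> m))) / ennreal (2 * real N + 2) \<partial>?D)"
  proof (intro nn_integral_cong)
    fix \<tau> :: real
    have "(\<integral>\<^sup>+u. F (st \<rho>m \<rho>p N s (\<tau>, m, u)) \<partial>U01) =
       F (st \<rho>m \<rho>p N s (\<tau>, m, pp \<rho>m \<rho>p N s \<tau> m - 1)) * ennreal (clmp (pp \<rho>m \<rho>p N s \<tau> m))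
        + F (st \<rho>m \<rho>p N s (\<tau>, m, pp \<rho>m \<rho>p N s \<tau> m)) * ennreal (1 - clmp (pp \<rho>m \<rho>p N s \<tau> m))" for m
      by (subst st_split) (simp only: if_distrib[of F] unif_if)
    then show "(\<integral>\<^sup>+m. \<integral>\<^sup>+u. F (st \<rho>m \<rho>p N s (\<tau>, m, u)) \<partial>U01 \<partial>?P) = 
      (\<Sum>m\<in>{0..<2*N+2}. F (st \<rho>m \<rho>p N s (\<tau>, m, pp \<rho>m \<rho>p N s \<tau> m - 1)) * ennreal (clmp (pp \<rho>m \<rho>p N s \<tau> m))
        + F (st \<rho>m \<rho>p N s (\<tau>, m, pp \<rho>m \<rho>p N s \<tau> m)) * ennreal (1 - clmp (pp \<rho>m \<rho>p N s \<tau> m))) / ennreal (2 * real N + 2)"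
      by (simp add: nn_integral_pmf_of_set ennreal_of_nat_eq_real_of_nat add.commute)
  qed
  finally show ?thesis .
qed

lemma tau_int:
  assumes R: "R > 0" and A: "0 \<le> A" and B: "0 \<le> B"
  shows "(\<integral>\<^sup>+\<tau>. ennreal (A + B * exp (- R * \<tau>)) \<partial>density lborel (\<lambda>x. ennreal (exponential_density R x)))
     = ennreal (A + B / 2)"
proof -
  let ?D = "density lborel (\<lambda>x. ennreal (exponential_density R x))"
  interpret D: prob_space ?D using prob_space_exponential_density[OF R] .
  have md: "(\<lambda>x. ennreal (exponential_density R x)) \<in> borel_measurable lborel"
    by (simp add: exponential_density_def)
  have "(\<integral>\<^sup>+\<tau>. ennreal (A + B * exp (- R * \<tau>)) \<partial>?D) = (\<integral>\<^sup>+\<tau>. ennreal A + ennreal (B * exp (- R * \<tau>)) \<partial>?D)"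
    using A B by (intro nn_integral_cong) (simp add: ennreal_plus)
  also have "\<dots> = (\<integral>\<^sup>+\<tau>. ennreal A \<partial>?D) + (\<integral>\<^sup>+\<tau>. ennreal (B * exp (- R * \<tau>)) \<partial>?D)"
    by (intro nn_integral_add) auto
  also have "(\<integral>\<^sup>+\<tau>. ennreal A \<partial>?D) = ennreal A" using D.emeasure_space_1 by simp
  also have "(\<integral>\<^sup>+\<tau>. ennreal (B * exp (- R * \<tau>)) \<partial>?D)
      = (\<integral>\<^sup>+\<tau>. ennreal (exponential_density R \<tau>) * ennreal (B * exp (- R * \<tau>)) \<partial>lborel)"
    by (rule nn_integral_density[OF md]) auto
  also have "\<dots> = (\<integral>\<^sup>+\<tau>. ennreal (B / 2) * ennreal (exponential_density (2 * R) \<tau>) \<partial>lborel)"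
  proof (intro nn_integral_cong)
    fix \<tau> :: real
    show "ennreal (exponential_density R \<tau>) * ennreal (B * exp (- R * \<tau>)) =
          ennreal (B / 2) * ennreal (exponential_density (2 * R) \<tau>)"
      using R B by (auto simp: exponential_density_def ennreal_mult'[symmetric] exp_add[symmetric]
          intro!: arg_cong[where f=ennreal])
  qed
  also have "\<dots> = ennreal (B / 2) * (\<integral>\<^sup>+\<tau>. ennreal (exponential_density (2 * R) \<tau>) \<partial>lborel)"
    by (rule nn_integral_cmult) (simp add: exponential_density_def)
  also have "(\<integral>\<^sup>+\<tau>. ennreal (exponential_density (2 * R) \<tau>) \<partial>lborel) = 1"
  proof -
    interpret E: prob_space "density lborel (exponential_density (2 * R))"
      using prob_space_exponential_density R by simp
    have "emeasure (density lborel (exponential_density (2 * R))) UNIV = 1"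
      using E.emeasure_space_1 by simp
    then show ?thesis
      by (subst (asm) emeasure_density) (auto simp: exponential_density_def)
  qed
  finally show ?thesis using A B by (simp add: ennreal_plus)
qed


definition gS :: "real \<Rightarrow> real \<Rightarrow> real \<Rightarrow> real" where
  "gS \<theta> B x = exp (\<theta> * (x - B)) + exp (\<theta> * (- x - B))"
definition gst :: "real \<Rightarrow> real \<Rightarrow> nat \<Rightarrow> state \<Rightarrow> real" where
  "gst \<theta> B N s = gS \<theta> B (real_of_int (Ssum N (snd (snd s))))"
definition est :: "real \<Rightarrow> real \<Rightarrow> state \<Rightarrow> real" where
  "est R T s = exp (R * (T - fst s))"
definition cc :: "real \<Rightarrow> nat \<Rightarrow> real" where
  "cc \<theta> N = exp (\<theta> / (2 * real N + 2) + \<theta>^2)"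

lemma gst_pos: "0 \<le> gst \<theta> B N s" by (simp add: gst_def gS_def add_nonneg_nonneg)
lemma est_pos: "0 \<le> est R T s" by (simp add: est_def)
lemma cc_ge1: "0 \<le> \<theta> \<Longrightarrow> 1 \<le> cc \<theta> N" by (simp add: cc_def)

lemma dA_abs: "\<bar>dA \<eta> N m\<bar> \<le> 1" by (simp add: dA_def dl_def Let_def)
lemma dR_abs: "\<bar>dR \<eta> N m\<bar> \<le> 1" by (simp add: dR_def dl_def Let_def)

lemma avg_g:
  assumes th: "0 \<le> \<theta>" "\<theta> \<le> 1"
  shows "(\<Sum>m\<in>{0..<2*N+2}. gst \<theta> B N (st \<rho>m \<rho>p N s (\<tau>, m, pp \<rho>m \<rho>p N s \<tau> m - 1)) * clmp (pp \<rho>m \<rho>p N s \<tau> m)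
        + gst \<theta> B N (st \<rho>m \<rho>p N s (\<tau>, m, pp \<rho>m \<rho>p N s \<tau> m)) * (1 - clmp (pp \<rho>m \<rho>p N s \<tau> m)))
      \<le> (2 * real N + 2) * cc \<theta> N * gst \<theta> B N s"
proof -
  obtain t \<eta> h where s: "s = (t, \<eta>, h)" by (cases s)
  define q where "q m = clmp (pp \<rho>m \<rho>p N s \<tau> m)" for m
  define a where "a m = real_of_int (dA \<eta> N m)" for m
  define r where "r m = real_of_int (dR \<eta> N m)" for m
  define S where "S = real_of_int (Ssum N h)"
  have q: "0 \<le> q m \<and> q m \<le> 1" for m by (simp add: q_def clmp_bounds)
  have ar: "\<bar>a m\<bar> \<le> 1 \<and> \<bar>r m\<bar> \<le> 1" for m
    unfolding a_def r_def using dA_abs[of \<eta> N m] dR_abs[of \<eta> N m] by linarith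
  have dr: "\<bar>\<Sum>m<2*N+2. q m * a m + (1 - q m) * r m\<bar> \<le> 1"
    using drift[where q=q and \<eta>=\<eta> and N=N] q unfolding a_def r_def by auto
  have dr': "\<bar>\<Sum>m<2*N+2. q m * (- a m) + (1 - q m) * (- r m)\<bar> \<le> 1"
  proof -
    have "(\<Sum>m<2*N+2. q m * (- a m) + (1 - q m) * (- r m)) = - (\<Sum>m<2*N+2. q m * a m + (1 - q m) * r m)"
      by (simp add: sum_negf[symmetric])
    then show ?thesis using dr by simp
  qed
  have ar': "\<bar>- a m\<bar> \<le> 1 \<and> \<bar>- r m\<bar> \<le> 1" for m using ar[of m] by simp
  have O1: "(\<Sum>m<2*N+2. q m * exp (\<theta> * a m) + (1 - q m) * exp (\<theta> * r m)) \<le> real (2*N+2) * (1 + \<theta>^2) + \<bar>\<theta>\<bar>"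
    by (rule onestep_real) (use th q ar dr in auto)
  have O2: "(\<Sum>m<2*N+2. q m * exp (\<theta> * (- a m)) + (1 - q m) * exp (\<theta> * (- r m))) \<le> real (2*N+2) * (1 + \<theta>^2) + \<bar>\<theta>\<bar>"
    by (rule onestep_real) (use th q ar' dr' in auto)
  have K: "real (2*N+2) * (1 + \<theta>^2) + \<bar>\<theta>\<bar> \<le> (2 * real N + 2) * cc \<theta> N"
  proof -
    have "real (2*N+2) * (1 + \<theta>^2) + \<bar>\<theta>\<bar> = (2 * real N + 2) * (1 + (\<theta> / (2 * real N + 2) + \<theta>^2))"
      using th by (simp add: field_simps)
    also have "\<dots> \<le> (2 * real N + 2) * cc \<theta> N"
      unfolding cc_def by (intro mult_left_mono exp_ge_add_one_self) simp
    finally show ?thesis .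
  qed
  have gA: "gst \<theta> B N (st \<rho>m \<rho>p N s (\<tau>, m, pp \<rho>m \<rho>p N s \<tau> m - 1))
      = exp (\<theta> * (S - B)) * exp (\<theta> * a m) + exp (\<theta> * (- S - B)) * exp (\<theta> * (- a m))" if "m < 2*N+2" for m
    using S_acc[OF that, of \<rho>m \<rho>p s \<tau>] unfolding gst_def gS_def s S_def a_def
    by (simp add: exp_add[symmetric] algebra_simps)
  have gR: "gst \<theta> B N (st \<rho>m \<rho>p N s (\<tau>, m, pp \<rho>m \<rho>p N s \<tau> m))
      = exp (\<theta> * (S - B)) * exp (\<theta> * r m) + exp (\<theta> * (- S - B)) * exp (\<theta> * (- r m))" if "m < 2*N+2" for m
    using S_rej[OF that, of \<rho>m \<rho>p s \<tau>] unfolding gst_def gS_def s S_def r_def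
    by (simp add: exp_add[symmetric] algebra_simps)
  have "(\<Sum>m\<in>{0..<2*N+2}. gst \<theta> B N (st \<rho>m \<rho>p N s (\<tau>, m, pp \<rho>m \<rho>p N s \<tau> m - 1)) * clmp (pp \<rho>m \<rho>p N s \<tau> m)
        + gst \<theta> B N (st \<rho>m \<rho>p N s (\<tau>, m, pp \<rho>m \<rho>p N s \<tau> m)) * (1 - clmp (pp \<rho>m \<rho>p N s \<tau> m)))
     = exp (\<theta> * (S - B)) * (\<Sum>m<2*N+2. q m * exp (\<theta> * a m) + (1 - q m) * exp (\<theta> * r m))
       + exp (\<theta> * (- S - B)) * (\<Sum>m<2*N+2. q m * exp (\<theta> * (- a m)) + (1 - q m) * exp (\<theta> * (- r m)))"
    unfolding sum_distrib_left sum.distrib[symmetric] atLeast0LessThan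
    by (intro sum.cong refl) (simp add: gA gR q_def algebra_simps)
  also have "\<dots> \<le> exp (\<theta> * (S - B)) * ((2 * real N + 2) * cc \<theta> N) + exp (\<theta> * (- S - B)) * ((2 * real N + 2) * cc \<theta> N)"
    using O1 O2 K by (intro add_mono mult_left_mono) auto
  also have "\<dots> = (2 * real N + 2) * cc \<theta> N * gst \<theta> B N s"
    unfolding gst_def gS_def s S_def by (simp add: algebra_simps)
  finally show ?thesis .
qed

lemma avg_e:
  "(\<Sum>m\<in>{0..<2*N+2}. est R T (st \<rho>m \<rho>p N s (\<tau>, m, pp \<rho>m \<rho>p N s \<tau> m - 1)) * clmp (pp \<rho>m \<rho>p N s \<tau> m)
        + est R T (st \<rho>m \<rho>p N s (\<tau>, m, pp \<rho>m \<rho>p N s \<tau> m)) * (1 - clmp (pp \<rho>m \<rho>p N s \<tau> m)))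
      = (2 * real N + 2) * (est R T s * exp (- R * \<tau>))"
proof -
  have "est R T (st \<rho>m \<rho>p N s (\<tau>, m, u)) = est R T s * exp (- R * \<tau>)" for m u
    by (simp add: est_def fst_st exp_add[symmetric] algebra_simps)
  then show ?thesis by (simp add: algebra_simps)
qed


definition Psi where
  "Psi \<rho>m \<rho>p N \<theta> B R T K s \<omega> = (\<Sum>k<K. gst \<theta> B N (ev \<rho>m \<rho>p N s \<omega> k)) + est R T (ev \<rho>m \<rho>p N s \<omega> K)"
definition Bnd where
  "Bnd \<theta> B N R T K s = (\<Sum>j<K. cc \<theta> N ^ j) * gst \<theta> B N s + (1/2)^K * est R T s"

lemma Psi_pos: "0 \<le> Psi \<rho>m \<rho>p N \<theta> B R T K s \<omega>"
  unfolding Psi_def by (intro add_nonneg_nonneg sum_nonneg gst_pos est_pos)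

lemma Bnd_pos: "0 \<le> \<theta> \<Longrightarrow> 0 \<le> Bnd \<theta> B N R T K s"
  unfolding Bnd_def using cc_ge1[of \<theta> N]
  by (intro add_nonneg_nonneg mult_nonneg_nonneg sum_nonneg gst_pos est_pos) auto

lemma Psi_Suc: "Psi \<rho>m \<rho>p N \<theta> B R T (Suc K) s \<omega> =
    gst \<theta> B N s + Psi \<rho>m \<rho>p N \<theta> B R T K (st \<rho>m \<rho>p N s (shd \<omega>)) (stl \<omega>)"
  unfolding Psi_def sum.lessThan_Suc_shift by simp

lemma ennr_pair:
  assumes "0 \<le> x" "0 \<le> y" "0 \<le> q" "q \<le> 1"
  shows "ennreal x * ennreal q + ennreal y * ennreal (1 - q) = ennreal (x * q + y * (1 - q))"
  using assms by (simp add: ennreal_mult[symmetric] ennreal_plus)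

lemma bnd_alg: "(1 + c * C) * (g::real) + (1/2)^(Suc K) * E = g + (c * C * g + (1/2)^K * E / 2)"
  by (simp add: algebra_simps)

lemma avg_alg: "(d::real) > 0 \<Longrightarrow> (C * (d * c * g) + h * (d * (E * x))) / d = c * C * g + (h * E) * x"
  by (simp add: field_simps)

lemma onestep_Bnd:
  assumes R: "total_rate \<alpha> N > 0" and th: "0 \<le> \<theta>" "\<theta> \<le> 1"
  shows "(\<integral>\<^sup>+x. ennreal (Bnd \<theta> B N (total_rate \<alpha> N) T K (st \<rho>m \<rho>p N s x)) \<partial>step_meas \<alpha> N)
     \<le> ennreal (cc \<theta> N * (\<Sum>j<K. cc \<theta> N ^ j) * gst \<theta> B N s + (1/2)^K * est (total_rate \<alpha> N) T s / 2)"
proof -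
  let ?R = "total_rate \<alpha> N"
  let ?D = "density lborel (\<lambda>x. ennreal (exponential_density ?R x))"
  let ?F = "\<lambda>s. Bnd \<theta> B N ?R T K s"
  let ?C = "(\<Sum>j<K. cc \<theta> N ^ j)"
  have Cpos: "0 \<le> ?C" by (intro sum_nonneg) (simp add: cc_def)
  have "(\<integral>\<^sup>+x. ennreal (?F (st \<rho>m \<rho>p N s x)) \<partial>step_meas \<alpha> N) \<le>
    (\<integral>\<^sup>+\<tau>. (\<Sum>m\<in>{0..<2*N+2}. ennreal (?F (st \<rho>m \<rho>p N s (\<tau>, m, pp \<rho>m \<rho>p N s \<tau> m - 1))) * ennreal (clmp (pp \<rho>m \<rho>p N s \<tau> m))
        + ennreal (?F (st \<rho>m \<rho>p N s (\<tau>, m, pp \<rho>m \<rho>p N s \<tau> m))) * ennreal (1 - clmp (pp \<rho>m \<rho>p N s \<tau> m))) / ennreal (2 * real N + 2)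
       \<partial>?D)"
    by (rule onestep_general)
  also have "\<dots> \<le> (\<integral>\<^sup>+\<tau>. ennreal (cc \<theta> N * ?C * gst \<theta> B N s + ((1/2)^K * est ?R T s) * exp (- ?R * \<tau>)) \<partial>?D)"
  proof (intro nn_integral_mono)
    fix \<tau>
    let ?a = "\<lambda>m. st \<rho>m \<rho>p N s (\<tau>, m, pp \<rho>m \<rho>p N s \<tau> m - 1)"
    let ?r = "\<lambda>m. st \<rho>m \<rho>p N s (\<tau>, m, pp \<rho>m \<rho>p N s \<tau> m)"
    let ?q = "\<lambda>m. clmp (pp \<rho>m \<rho>p N s \<tau> m)"
    have "(\<Sum>m\<in>{0..<2*N+2}. ennreal (?F (?a m)) * ennreal (?q m) + ennreal (?F (?r m)) * ennreal (1 - ?q m))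
        = (\<Sum>m\<in>{0..<2*N+2}. ennreal (?F (?a m) * ?q m + ?F (?r m) * (1 - ?q m)))"
      using th by (intro sum.cong refl ennr_pair Bnd_pos clmp_bounds)
    also have "\<dots> = ennreal (\<Sum>m\<in>{0..<2*N+2}. ?F (?a m) * ?q m + ?F (?r m) * (1 - ?q m))"
      using th clmp_bounds
      by (intro sum_ennreal add_nonneg_nonneg mult_nonneg_nonneg Bnd_pos) auto
    finally have e0: "(\<Sum>m\<in>{0..<2*N+2}. ennreal (?F (?a m)) * ennreal (?q m) + ennreal (?F (?r m)) * ennreal (1 - ?q m))
        = ennreal (\<Sum>m\<in>{0..<2*N+2}. ?F (?a m) * ?q m + ?F (?r m) * (1 - ?q m))" .
    have Xpos: "0 \<le> (\<Sum>m\<in>{0..<2*N+2}. ?F (?a m) * ?q m + ?F (?r m) * (1 - ?q m))"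
      using th clmp_bounds
      by (intro sum_nonneg add_nonneg_nonneg mult_nonneg_nonneg Bnd_pos) auto
    have e1: "(\<Sum>m\<in>{0..<2*N+2}. ennreal (?F (?a m)) * ennreal (?q m) + ennreal (?F (?r m)) * ennreal (1 - ?q m)) / ennreal (2 * real N + 2)
        = ennreal ((\<Sum>m\<in>{0..<2*N+2}. ?F (?a m) * ?q m + ?F (?r m) * (1 - ?q m)) / (2 * real N + 2))"
      unfolding e0 by (rule divide_ennreal[OF Xpos]) simp
    have "(\<Sum>m\<in>{0..<2*N+2}. ?F (?a m) * ?q m + ?F (?r m) * (1 - ?q m))
       = ?C * (\<Sum>m\<in>{0..<2*N+2}. gst \<theta> B N (?a m) * ?q m + gst \<theta> B N (?r m) * (1 - ?q m))
         + (1/2)^K * (\<Sum>m\<in>{0..<2*N+2}. est ?R T (?a m) * ?q m + est ?R T (?r m) * (1 - ?q m))"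
      unfolding Bnd_def sum_distrib_left sum.distrib[symmetric]
      by (intro sum.cong refl) (simp add: algebra_simps)
    also have "\<dots> \<le> ?C * ((2 * real N + 2) * cc \<theta> N * gst \<theta> B N s)
         + (1/2)^K * ((2 * real N + 2) * (est ?R T s * exp (- ?R * \<tau>)))"
      using avg_g[OF th, where N=N and B=B and \<rho>m=\<rho>m and \<rho>p=\<rho>p and s=s and \<tau>=\<tau>]
        avg_e[where R="?R" and T=T and N=N and \<rho>m=\<rho>m and \<rho>p=\<rho>p and s=s and \<tau>=\<tau>] Cpos
      by (intro add_mono mult_left_mono) auto
    finally have "(\<Sum>m\<in>{0..<2*N+2}. ?F (?a m) * ?q m + ?F (?r m) * (1 - ?q m)) / (2 * real N + 2)
        \<le> (?C * ((2 * real N + 2) * cc \<theta> N * gst \<theta> B N s)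
         + (1/2)^K * ((2 * real N + 2) * (est ?R T s * exp (- ?R * \<tau>)))) / (2 * real N + 2)"
      by (intro divide_right_mono) auto
    also have "\<dots> = cc \<theta> N * ?C * gst \<theta> B N s + ((1/2)^K * est ?R T s) * exp (- ?R * \<tau>)"
      by (rule avg_alg) simp
    finally show "(\<Sum>m\<in>{0..<2*N+2}. ennreal (?F (?a m)) * ennreal (?q m) + ennreal (?F (?r m)) * ennreal (1 - ?q m)) / ennreal (2 * real N + 2)
        \<le> ennreal (cc \<theta> N * ?C * gst \<theta> B N s + ((1/2)^K * est ?R T s) * exp (- ?R * \<tau>))"
      unfolding e1 by (rule ennreal_leI)
  qed
  also have "\<dots> = ennreal (cc \<theta> N * ?C * gst \<theta> B N s + (1/2)^K * est ?R T s / 2)"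
    using R th Cpos cc_ge1[OF th(1), of N]
    by (intro tau_int) (auto intro!: mult_nonneg_nonneg gst_pos est_pos)
  finally show ?thesis .
qed

lemma chain:
  assumes R: "total_rate \<alpha> N > 0" and th: "0 \<le> \<theta>" "\<theta> \<le> 1"
  shows "(\<integral>\<^sup>+\<omega>. ennreal (Psi \<rho>m \<rho>p N \<theta> B (total_rate \<alpha> N) T K s \<omega>) \<partial>stream_space (step_meas \<alpha> N))
     \<le> ennreal (Bnd \<theta> B N (total_rate \<alpha> N) T K s)"
proof (induction K arbitrary: s)
  interpret M: prob_space "step_meas \<alpha> N" using prob_step[OF R] .
  interpret S: prob_space "stream_space (step_meas \<alpha> N)" by (rule M.prob_space_stream_space)
  case 0
  show ?case by (simp add: Psi_def Bnd_def S.emeasure_space_1)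
next
  interpret M: prob_space "step_meas \<alpha> N" using prob_step[OF R] .
  interpret S: prob_space "stream_space (step_meas \<alpha> N)" by (rule M.prob_space_stream_space)
  let ?R = "total_rate \<alpha> N"
  case (Suc K)
  have "(\<integral>\<^sup>+\<omega>. ennreal (Psi \<rho>m \<rho>p N \<theta> B ?R T (Suc K) s \<omega>) \<partial>stream_space (step_meas \<alpha> N))
      = (\<integral>\<^sup>+\<omega>. ennreal (gst \<theta> B N s) + ennreal (Psi \<rho>m \<rho>p N \<theta> B ?R T K (st \<rho>m \<rho>p N s (shd \<omega>)) (stl \<omega>)) \<partial>stream_space (step_meas \<alpha> N))"
    unfolding Psi_Suc by (intro nn_integral_cong) (simp add: ennreal_plus gst_pos Psi_pos)
  also have "\<dots> \<le> ennreal (gst \<theta> B N s) + (\<integral>\<^sup>+\<omega>. ennreal (Psi \<rho>m \<rho>p N \<theta> B ?R T K (st \<rho>m \<rho>p N s (shd \<omega>)) (stl \<omega>)) \<partial>stream_space (step_meas \<alpha> N))"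
    by (rule S.const_add_le)
  also have "(\<integral>\<^sup>+\<omega>. ennreal (Psi \<rho>m \<rho>p N \<theta> B ?R T K (st \<rho>m \<rho>p N s (shd \<omega>)) (stl \<omega>)) \<partial>stream_space (step_meas \<alpha> N))
      \<le> (\<integral>\<^sup>+x. \<integral>\<^sup>+\<omega>. ennreal (Psi \<rho>m \<rho>p N \<theta> B ?R T K (st \<rho>m \<rho>p N s x) \<omega>) \<partial>stream_space (step_meas \<alpha> N) \<partial>step_meas \<alpha> N)"
    using M.stream_le[of "\<lambda>\<omega>. ennreal (Psi \<rho>m \<rho>p N \<theta> B ?R T K (st \<rho>m \<rho>p N s (shd \<omega>)) (stl \<omega>))"] by simp
  also have "\<dots> \<le> (\<integral>\<^sup>+x. ennreal (Bnd \<theta> B N ?R T K (st \<rho>m \<rho>p N s x)) \<partial>step_meas \<alpha> N)"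
    by (intro nn_integral_mono Suc.IH)
  also have "\<dots> \<le> ennreal (cc \<theta> N * (\<Sum>j<K. cc \<theta> N ^ j) * gst \<theta> B N s + (1/2)^K * est ?R T s / 2)"
    by (rule onestep_Bnd[OF R th])
  finally have "(\<integral>\<^sup>+\<omega>. ennreal (Psi \<rho>m \<rho>p N \<theta> B ?R T (Suc K) s \<omega>) \<partial>stream_space (step_meas \<alpha> N))
     \<le> ennreal (gst \<theta> B N s) + ennreal (cc \<theta> N * (\<Sum>j<K. cc \<theta> N ^ j) * gst \<theta> B N s + (1/2)^K * est ?R T s / 2)"
    by (simp add: add_left_mono)
  also have "\<dots> = ennreal (Bnd \<theta> B N ?R T (Suc K) s)"
  proof -
    have "(\<Sum>j<Suc K. cc \<theta> N ^ j) = 1 + cc \<theta> N * (\<Sum>j<K. cc \<theta> N ^ j)"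
      by (simp only: sum.lessThan_Suc_shift power_0 power_Suc sum_distrib_left)
    then have eq: "Bnd \<theta> B N ?R T (Suc K) s = gst \<theta> B N s + (cc \<theta> N * (\<Sum>j<K. cc \<theta> N ^ j) * gst \<theta> B N s + (1/2)^K * est ?R T s / 2)"
      unfolding Bnd_def by (simp only: bnd_alg)
    have Xnn: "0 \<le> cc \<theta> N * (\<Sum>j<K. cc \<theta> N ^ j) * gst \<theta> B N s + (1/2)^K * est ?R T s / 2"
      using cc_ge1[OF th(1), of N]
      by (intro add_nonneg_nonneg mult_nonneg_nonneg gst_pos est_pos sum_nonneg divide_nonneg_nonneg) auto
    show ?thesis unfolding eq by (rule ennreal_plus[OF gst_pos Xnn, symmetric])
  qed
  finally show ?case .
qed


lemma Psi_ge_gst: "k < K \<Longrightarrow> gst \<theta> B N (ev \<rho>m \<rho>p N s \<omega> k) \<le> Psi \<rho>m \<rho>p N \<theta> B R T K s \<omega>"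
proof -
  assume k: "k < K"
  have "gst \<theta> B N (ev \<rho>m \<rho>p N s \<omega> k) \<le> (\<Sum>k<K. gst \<theta> B N (ev \<rho>m \<rho>p N s \<omega> k))"
    using k by (intro member_le_sum gst_pos) auto
  then show ?thesis unfolding Psi_def using est_pos[of R T] by (smt (verit))
qed

lemma Psi_ge_est: "est R T (ev \<rho>m \<rho>p N s \<omega> K) \<le> Psi \<rho>m \<rho>p N \<theta> B R T K s \<omega>"
  unfolding Psi_def by (simp add: sum_nonneg gst_pos)

lemma gS_ge1:
  assumes "0 \<le> \<theta>" "B \<le> \<bar>x\<bar>"
  shows "1 \<le> gS \<theta> B x"
proof (cases "0 \<le> x")
  case True
  then have "1 \<le> exp (\<theta> * (x - B))" using assms by (simp add: mult_nonneg_nonneg)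
  then show ?thesis unfolding gS_def using exp_gt_zero[of "\<theta> * (- x - B)"] by linarith
next
  case False
  then have "1 \<le> exp (\<theta> * (- x - B))" using assms by (simp add: mult_nonneg_nonneg)
  then show ?thesis unfolding gS_def using exp_gt_zero[of "\<theta> * (x - B)"] by linarith
qed

lemma bad_le_Psi:
  fixes \<eta> :: config
  assumes N: "N \<ge> 1" and R: "R > 0" and y0: "-1 \<le> y0" "y0 \<le> 1" and th: "0 \<le> \<theta>"
    and P: "P > 0"
    and Bdef: "B = (2 * real N + 2) * (L * P - (2 * real N + 1))"
    and t: "t \<in> {0..T}" and big: "\<bar>real_of_int (current \<rho>m \<rho>p N \<eta> \<omega> t \<lfloor>real N * y0\<rfloor>)\<bar> / P \<ge> L"
  shows "1 \<le> Psi \<rho>m \<rho>p N \<theta> B R T K (0, \<eta>, \<lambda>_. 0) \<omega>"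
proof -
  let ?H = "\<lambda>k. ev \<rho>m \<rho>p N (0, \<eta>, \<lambda>_. 0) \<omega> k"
  show ?thesis
  proof (cases "fst (?H K) \<le> T")
    case True
    then have "1 \<le> est R T (?H K)" unfolding est_def using R by (simp add: mult_nonneg_nonneg)
    then show ?thesis using Psi_ge_est[of R T \<rho>m \<rho>p N "(0, \<eta>, \<lambda>_. 0)" \<omega> K \<theta> B] by linarith
  next
    case False
    have K0: "K \<noteq> 0"
    proof
      assume "K = 0"
      then show False using False t by simp
    qed
    then obtain K' where K': "K = Suc K'" by (cases K) auto
    have ex: "t < fst (?H (Suc K'))" using False t K' by auto
    define j where "j = (LEAST k. fst (evolve \<rho>m \<rho>p N \<eta> \<omega> (Suc k)) > t)"
    have "j \<le> K'" unfolding j_def evolve_ev by (rule Least_le) (use ex in simp)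
    then have jK: "j < K" using K' by simp
    obtain \<eta>' h where Hj: "snd (?H j) = (\<eta>', h)" by (cases "snd (?H j)")
    have cur: "current \<rho>m \<rho>p N \<eta> \<omega> t \<lfloor>real N * y0\<rfloor> = h \<lfloor>real N * y0\<rfloor>"
      unfolding current_def unfolding j_def[symmetric] unfolding evolve_ev using Hj by simp
    have inv0: "invp N \<eta> (snd (0::real, \<eta>, (\<lambda>_. 0) :: int \<Rightarrow> int))" by (simp add: invp_def)
    have inv: "invp N \<eta> (\<eta>', h)" using invp_ev[OF inv0, of \<rho>m \<rho>p \<omega> j] Hj by simp
    define x0 where "x0 = \<lfloor>real N * y0\<rfloor>"
    have x0: "- int N - 1 \<le> x0" "x0 \<le> int N"
    proof -
      have "- real N \<le> real N * y0" using mult_left_mono[OF y0(1), of "real N"] by simp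
      then show "- int N - 1 \<le> x0" unfolding x0_def by linarith
      have "real N * y0 \<le> real N" using y0 by (simp add: mult_left_le)
      then show "x0 \<le> int N" unfolding x0_def by linarith
    qed
    have Sb: "\<bar>(2 * int N + 2) * h x0 - Ssum N h\<bar> \<le> (2 * int N + 2) * (2 * int N + 1)"
      by (rule Sbound[OF inv x0])
    have hbig: "L * P \<le> \<bar>real_of_int (h x0)\<bar>" using big P cur
      by (simp add: pos_le_divide_eq x0_def)
    have Sb': "\<bar>(2 * real N + 2) * real_of_int (h x0) - real_of_int (Ssum N h)\<bar> \<le> (2 * real N + 2) * (2 * real N + 1)"
      using Sb by (metis (mono_tags, opaque_lifting) of_int_abs of_int_add of_int_diff of_int_le_iff of_int_mult of_int_of_nat_eq of_int_numeral of_int_1)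
    have "(2 * real N + 2) * (L * P) \<le> (2 * real N + 2) * \<bar>real_of_int (h x0)\<bar>"
      using hbig by (intro mult_left_mono) auto
    then have "B \<le> \<bar>real_of_int (Ssum N h)\<bar>" unfolding Bdef using Sb'
      by (simp add: abs_mult algebra_simps)
    then have "1 \<le> gst \<theta> B N (?H j)" unfolding gst_def using Hj by (simp add: gS_ge1[OF th])
    then show ?thesis using Psi_ge_gst[OF jK, of \<theta> B N \<rho>m \<rho>p "(0, \<eta>, \<lambda>_. 0)" \<omega> R T] by linarith
  qed
qed

lemma rate_pos: "N \<ge> 1 \<Longrightarrow> total_rate \<alpha> N > 0"
  unfolding total_rate_def by (intro mult_pos_pos) auto

lemma prob_le_Bnd:
  fixes \<eta> :: config
  assumes N: "N \<ge> 1" and y0: "-1 \<le> y0" "y0 \<le> 1" and th: "0 \<le> \<theta>" "\<theta> \<le> 1"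
    and Bdef: "B = (2 * real N + 2) * (L * real N powr (1 + \<alpha>) - (2 * real N + 1))"
  shows "height_prob \<alpha> T \<rho>m \<rho>p y0 N \<eta> L \<le> Bnd \<theta> B N (total_rate \<alpha> N) T K (0, \<eta>, \<lambda>_. 0)"
proof -
  let ?M = "stream_space (step_meas \<alpha> N)"
  let ?R = "total_rate \<alpha> N"
  define Bad where "Bad = {\<omega> \<in> space ?M.
          \<exists>t\<in>{0..T}. \<bar>real_of_int (current \<rho>m \<rho>p N \<eta> \<omega> t \<lfloor>real N * y0\<rfloor>)\<bar>
                        / real N powr (1 + \<alpha>) \<ge> L}"
  have R: "?R > 0" using rate_pos[OF N] .
  have P: "real N powr (1 + \<alpha>) > 0" using N by simp
  have ind: "indicator Bad \<omega> \<le> ennreal (Psi \<rho>m \<rho>p N \<theta> B ?R T K (0, \<eta>, \<lambda>_. 0) \<omega>)" for \<omega>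
  proof (cases "\<omega> \<in> Bad")
    case True
    then obtain t where t: "t \<in> {0..T}" and big: "\<bar>real_of_int (current \<rho>m \<rho>p N \<eta> \<omega> t \<lfloor>real N * y0\<rfloor>)\<bar>
                        / real N powr (1 + \<alpha>) \<ge> L" unfolding Bad_def by blast
    have "1 \<le> Psi \<rho>m \<rho>p N \<theta> B ?R T K (0, \<eta>, \<lambda>_. 0) \<omega>"
      by (rule bad_le_Psi[OF N R y0 th(1) P Bdef t big])
    then show ?thesis using True by (simp add: ennreal_leI[of 1, simplified])
  next
    case False then show ?thesis by simp
  qed
  have em: "emeasure ?M Bad \<le> ennreal (Bnd \<theta> B N ?R T K (0, \<eta>, \<lambda>_. 0))"
  proof (cases "Bad \<in> sets ?M")
    case True
    have "emeasure ?M Bad = (\<integral>\<^sup>+\<omega>. indicator Bad \<omega> \<partial>?M)" using True by simp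
    also have "\<dots> \<le> (\<integral>\<^sup>+\<omega>. ennreal (Psi \<rho>m \<rho>p N \<theta> B ?R T K (0, \<eta>, \<lambda>_. 0) \<omega>) \<partial>?M)"
      by (intro nn_integral_mono ind)
    also have "\<dots> \<le> ennreal (Bnd \<theta> B N ?R T K (0, \<eta>, \<lambda>_. 0))"
      by (rule chain[OF R th])
    finally show ?thesis .
  next
    case False then show ?thesis by (simp add: emeasure_notin_sets)
  qed
  have "height_prob \<alpha> T \<rho>m \<rho>p y0 N \<eta> L = enn2real (emeasure ?M Bad)"
    unfolding height_prob_def Bad_def measure_def by simp
  also have "\<dots> \<le> Bnd \<theta> B N ?R T K (0, \<eta>, \<lambda>_. 0)"
    by (rule enn2real_leI[OF Bnd_pos[OF th(1)] em])
  finally show ?thesis .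
qed


lemma exp_half_le2: "exp (1/2::real) \<le> 2"
proof -
  have "exp (1/2::real) \<le> 1 + 1/2 + (1/2)^2" by (rule exp_bound) auto
  then show ?thesis by (simp add: power2_eq_square)
qed

lemma pow_half_bound:
  fixes R T :: real and K :: nat
  assumes "4 * R * T \<le> real K"
  shows "(1/2)^K * exp (R * T) \<le> exp (- (R * T))"
proof -
  have "exp (2 * (R * T)) \<le> exp (real K / 2)" using assms by simp
  also have "exp (real K / 2) = exp (1/2) ^ K" by (simp add: exp_of_nat_mult[symmetric])
  also have "\<dots> \<le> 2 ^ K" by (intro power_mono exp_half_le2) auto
  finally have a: "exp (2 * (R * T)) \<le> 2 ^ K" .
  have "(1/2)^K * exp (R * T) = exp (R * T) / 2 ^ K" by (simp add: power_one_over)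
  also have "\<dots> \<le> exp (R * T) / exp (2 * (R * T))"
    using a by (intro divide_left_mono) auto
  also have "\<dots> = exp (- (R * T))" by (simp add: exp_diff[symmetric])
  finally show ?thesis .
qed

lemma geo_le: "1 \<le> (c::real) \<Longrightarrow> (\<Sum>j<K. c ^ j) \<le> real K * c ^ K"
proof -
  assume c: "1 \<le> c"
  have "(\<Sum>j<K. c ^ j) \<le> (\<Sum>j<K. c ^ K)" using c by (intro sum_mono power_increasing) auto
  then show ?thesis by simp
qed

lemma inv_le1: "(1::real) \<le> x \<Longrightarrow> 1 / x \<le> 1" by simp
lemma le_mul_n: "0 \<le> (a::real) \<Longrightarrow> 1 \<le> n \<Longrightarrow> a \<le> a * n"
  using mult_left_mono[of 1 n a] by simp

lemma asym_main:
  fixes \<alpha> T L n :: real and K :: nat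
  assumes \<alpha>: "\<alpha> > 0" and T: "T > 0" and L: "L \<ge> 0" and n: "n \<ge> 1"
    and nQ: "n * T \<ge> \<bar>20 * T + 1 - 2 * L\<bar> + 1"
    and nC: "n powr \<alpha> \<ge> ln (32 * T + 2) + ln 2 + 17 + \<alpha>"
    and K1: "4 * (n powr (2 + \<alpha>) * (2 * n + 2)) * T \<le> real K"
    and K2: "real K \<le> 4 * (n powr (2 + \<alpha>) * (2 * n + 2)) * T + 1"
  shows "(\<Sum>j<K. exp ((1/n) / (2 * n + 2) + (1/n)^2) ^ j) * (2 * exp (- ((1/n) * ((2 * n + 2) * (L * n powr (1 + \<alpha>) - (2 * n + 1))))))
        + (1/2)^K * exp ((n powr (2 + \<alpha>) * (2 * n + 2)) * T)
      \<le> exp (n powr (1 + \<alpha>) * (20 * T + 1 - 2 * L))"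
proof -
  define P where "P = n powr (1 + \<alpha>)"
  define R where "R = n powr (2 + \<alpha>) * (2 * n + 2)"
  define Q where "Q = 20 * T + 1 - 2 * L"
  define c where "c = exp ((1/n) / (2 * n + 2) + (1/n)^2)"
  define B where "B = (2 * n + 2) * (L * P - (2 * n + 1))"
  define \<theta> where "\<theta> = 1 / n"
  have npos: "n > 0" using n by simp
  have P1: "P \<ge> 1" unfolding P_def using n \<alpha> by (simp add: ge_one_powr_ge_zero)
  have Pa: "P = n * n powr \<alpha>" unfolding P_def using npos by (simp add: powr_add)
  have e2: "(2::real) + \<alpha> = 1 + (1 + \<alpha>)" by simp
  have "n powr (2 + \<alpha>) = n powr (1 + (1 + \<alpha>))" by (simp only: e2)
  also have "\<dots> = n powr 1 * n powr (1 + \<alpha>)" by (rule powr_add)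
  also have "\<dots> = n * P" using npos unfolding P_def by simp
  finally have RP: "R = n * P * (2 * n + 2)" unfolding R_def by simp
  have Rpos: "R > 0" unfolding RP using npos P1 by simp
  have ln2: "ln 2 \<le> (1::real)" using ln_le_minus_one[of 2] by simp
  have PQ: "P * Q = 20 * (P * T) + P - 2 * (L * P)" unfolding Q_def by (simp add: algebra_simps)
  have t2a: "(1/2)^K * exp (R * T) \<le> exp (- (R * T))"
    by (rule pow_half_bound) (use K1 in \<open>simp add: R_def\<close>)
  have "n * T * P \<le> R * T"
  proof -
    have "n * P * 1 \<le> n * P * (2 * n + 2)" using npos P1 n by (intro mult_left_mono) auto
    then have "n * P \<le> R" unfolding RP by simp
    then show ?thesis using T by (simp add: mult_right_mono mult.commute mult.left_commute)
  qed
  moreover have "P * (\<bar>Q\<bar> + 1) \<le> P * (n * T)" using nQ P1 unfolding Q_def by (intro mult_left_mono) auto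
  ultimately have a1: "P * \<bar>Q\<bar> + P \<le> R * T" by (simp add: algebra_simps)
  have a2: "- (P * \<bar>Q\<bar>) \<le> P * Q"
  proof -
    have "P * (- \<bar>Q\<bar>) \<le> P * Q" using P1 by (intro mult_left_mono) auto
    then show ?thesis by simp
  qed
  have "- (R * T) \<le> P * Q - ln 2" using a1 a2 P1 ln2 by linarith
  then have "exp (- (R * T)) \<le> exp (P * Q - ln 2)" by simp
  also have "\<dots> = exp (P * Q) / 2" by (simp add: exp_diff)
  finally have t2: "(1/2)^K * exp (R * T) \<le> exp (P * Q) / 2" using t2a by linarith
  have Kpos: "real K \<ge> 1"
  proof -
    have "4 * R * T > 0" using Rpos T by simp
    then have "real K > 0" using K1 unfolding R_def by linarith
    then have "K > 0" by simp
    then show ?thesis by simp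
  qed
  have c1: "1 \<le> c" unfolding c_def using npos by simp
  have lnc: "ln c = \<theta> / (2 * n + 2) + \<theta>^2" unfolding c_def \<theta>_def by simp
  have KR: "real K \<le> 4 * R * T + 1" using K2 unfolding R_def by simp
  have nth: "n * \<theta> = 1" unfolding \<theta>_def using npos by simp
  have th0: "0 < \<theta>" "\<theta> \<le> 1" unfolding \<theta>_def using n by auto
  define u where "u = 1 / (2 * n + 2)"
  have nu: "(2 * n + 2) * u = 1" unfolding u_def using npos by simp
  have u0: "0 < u" "u \<le> 1" unfolding u_def using npos by auto
  have thu: "\<theta> / (2 * n + 2) = \<theta> * u" unfolding u_def by simp
  have A1: "real K * (\<theta> / (2 * n + 2)) \<le> 4 * (P * T) + 1"
  proof -
    have "real K * (\<theta> * u) \<le> (4 * R * T + 1) * (\<theta> * u)"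
      using KR th0 u0 by (intro mult_right_mono) auto
    also have "\<dots> = 4 * T * (P * (n * \<theta>) * ((2 * n + 2) * u)) + \<theta> * u" unfolding RP by (simp add: algebra_simps)
    also have "\<dots> = 4 * (P * T) + \<theta> * u" unfolding nth nu by simp
    also have "\<theta> * u \<le> 1" using th0 u0 by (simp add: mult_le_one)
    finally show ?thesis unfolding thu by simp
  qed
  have A2: "real K * \<theta>^2 \<le> 16 * (P * T) + 1"
  proof -
    have "real K * \<theta>^2 \<le> (4 * R * T + 1) * \<theta>^2"
      using KR by (intro mult_right_mono) auto
    also have "\<dots> = 4 * T * (P * (2 * n * \<theta> + 2 * \<theta>) * (n * \<theta>)) + \<theta>^2" unfolding RP by (simp add: algebra_simps power2_eq_square)
    also have "\<dots> = 4 * T * (P * (2 + 2 * \<theta>)) + \<theta>^2" using nth by (simp add: mult.assoc)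
    also have "P * (2 + 2 * \<theta>) \<le> P * 4" using th0 P1 by (intro mult_left_mono) auto
    also have "\<theta>^2 \<le> 1" using th0 by (simp add: power_le_one)
    finally show ?thesis using T by (simp add: algebra_simps)
  qed
  have A3: "\<theta> * B \<ge> 2 * (L * P) - 12 * n"
  proof -
    have "\<theta> * B = ((2 * n + 2) / n) * (L * P) - (2 * n + 2) * (2 * n + 1) / n"
      unfolding B_def \<theta>_def using npos by (simp add: field_simps)
    moreover have "((2 * n + 2) / n) * (L * P) \<ge> 2 * (L * P)"
    proof (intro mult_right_mono)
      show "2 \<le> (2 * n + 2) / n" using npos by (simp add: pos_le_divide_eq)
      show "0 \<le> L * P" using L P1 by simp
    qed
    moreover have "(2 * n + 2) * (2 * n + 1) / n \<le> 12 * n"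
    proof -
      have "(2 * n + 2) * (2 * n + 1) \<le> (4 * n) * (3 * n)" using n by (intro mult_mono) auto
      then show ?thesis using npos by (simp add: pos_divide_le_eq algebra_simps)
    qed
    ultimately show ?thesis by simp
  qed
  have A4: "ln (2 * real K) \<le> ln (32 * T + 2) + 3 * n + \<alpha> * n"
  proof -
    define X where "X = n^2 * P"
    have X1: "1 \<le> X" unfolding X_def using n P1 one_le_power[of n 2] by (metis mult_mono' mult.right_neutral zero_le_one order_trans)
    have "R \<le> 4 * X"
    proof -
      have "n * P * (2 * n + 2) \<le> n * P * (4 * n)" using n npos P1 by (intro mult_left_mono) auto
      then show ?thesis unfolding RP X_def by (simp add: power2_eq_square algebra_simps)
    qed
    then have "4 * R * T \<le> 16 * T * X" using T by simp
    then have "2 * real K \<le> 32 * T * X + 2" using KR by simp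
    also have "\<dots> \<le> 32 * T * X + 2 * X" using X1 by simp
    also have "\<dots> = (32 * T + 2) * X" by (simp add: algebra_simps)
    finally have le: "2 * real K \<le> (32 * T + 2) * X" .
    have "ln (2 * real K) \<le> ln ((32 * T + 2) * X)" using le Kpos by simp
    also have "\<dots> = ln (32 * T + 2) + 2 * ln n + (1 + \<alpha>) * ln n"
      using npos T P1 unfolding X_def P_def by (simp add: ln_mult ln_powr ln_realpow)
    finally have l1: "ln (2 * real K) \<le> ln (32 * T + 2) + 3 * ln n + \<alpha> * ln n" by (simp add: algebra_simps)
    have "(3 + \<alpha>) * ln n \<le> (3 + \<alpha>) * n" using ln_le_minus_one[OF npos] \<alpha> by (intro mult_left_mono) auto
    then have l2: "3 * ln n + \<alpha> * ln n \<le> 3 * n + \<alpha> * n" by (simp add: algebra_simps)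
    show ?thesis using l1 l2 by linarith
  qed
  have A5: "ln (32 * T + 2) + ln 2 + 2 + 15 * n + \<alpha> * n \<le> P"
  proof -
    have C0: "0 \<le> ln (32 * T + 2)" using T by simp
    have b1: "ln (32 * T + 2) \<le> ln (32 * T + 2) * n" by (rule le_mul_n[OF C0 n])
    have b2: "ln 2 \<le> ln 2 * n" by (rule le_mul_n[OF _ n]) simp
    have "ln (32 * T + 2) + ln 2 + 2 + 15 * n + \<alpha> * n \<le> (ln (32 * T + 2) + ln 2 + 17 + \<alpha>) * n"
    proof -
      have eq: "(ln (32 * T + 2) + ln 2 + 17 + \<alpha>) * n = ln (32 * T + 2) * n + ln 2 * n + 17 * n + \<alpha> * n"
        by (simp add: algebra_simps)
      show ?thesis using b1 b2 n eq by linarith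
    qed
    also have "\<dots> \<le> n powr \<alpha> * n" using nC npos by (intro mult_right_mono) auto
    finally show ?thesis unfolding Pa by (simp add: mult.commute)
  qed
  have sum1: "(\<Sum>j<K. c ^ j) * (2 * exp (- (\<theta> * B))) \<le> exp (ln (2 * real K) + real K * ln c - \<theta> * B)"
  proof -
    have "(\<Sum>j<K. c ^ j) * (2 * exp (- (\<theta> * B))) \<le> (real K * c ^ K) * (2 * exp (- (\<theta> * B)))"
      using geo_le[OF c1] by (intro mult_right_mono) auto
    also have "\<dots> = exp (ln (2 * real K)) * exp (real K * ln c) * exp (- (\<theta> * B))"
    proof -
      have "exp (ln (2 * real K)) = 2 * real K" using Kpos by simp
      moreover have "exp (real K * ln c) = c ^ K" using c1 by (simp add: exp_of_nat_mult)
      ultimately show ?thesis by simp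
    qed
    also have "\<dots> = exp (ln (2 * real K) + real K * ln c - \<theta> * B)"
      by (simp add: exp_add[symmetric])
    finally show ?thesis .
  qed
  have "ln (2 * real K) + real K * ln c - \<theta> * B \<le> P * Q - ln 2"
  proof -
    have "real K * ln c = real K * (\<theta> / (2 * n + 2)) + real K * \<theta>^2" unfolding lnc by (simp add: distrib_left)
    then have "real K * ln c \<le> 20 * (P * T) + 2" using A1 A2 by linarith
    then show ?thesis using A3 A4 A5 PQ by linarith
  qed
  then have "exp (ln (2 * real K) + real K * ln c - \<theta> * B) \<le> exp (P * Q - ln 2)" by simp
  also have "\<dots> = exp (P * Q) / 2" by (simp add: exp_diff)
  finally have t1: "(\<Sum>j<K. c ^ j) * (2 * exp (- (\<theta> * B))) \<le> exp (P * Q) / 2"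
    using sum1 by linarith
  have "(\<Sum>j<K. c ^ j) * (2 * exp (- (\<theta> * B))) + (1/2)^K * exp (R * T) \<le> exp (P * Q)"
    using t1 t2 by linarith
  then show ?thesis unfolding P_def R_def Q_def c_def B_def \<theta>_def .
qed


lemma ev_real_ge: "eventually (\<lambda>N. X \<le> real N) sequentially"
proof -
  have "\<forall>N\<ge>nat \<lceil>X\<rceil>. X \<le> real N"
  proof (intro allI impI)
    fix N assume "nat \<lceil>X\<rceil> \<le> N"
    then have "real (nat \<lceil>X\<rceil>) \<le> real N" by simp
    then show "X \<le> real N" using real_nat_ceiling_ge[of X] by linarith
  qed
  then show ?thesis unfolding eventually_sequentially by blast
qed

lemma bound_fixed_L:
  fixes \<alpha> T y0 L :: real and \<rho>m \<rho>p :: "real \<Rightarrow> real" and \<eta> :: "nat \<Rightarrow> config"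
  assumes \<alpha>: "\<alpha> > 0" and T: "T > 0" and y0: "-1 \<le> y0" "y0 \<le> 1" and L: "L \<ge> 0"
  shows "limsup (\<lambda>N. ereal (1 / real N powr (1 + \<alpha>)) * ln_ereal (height_prob \<alpha> T \<rho>m \<rho>p y0 N (\<eta> N) L))
     \<le> ereal (20 * T + 1 - 2 * L)"
proof (rule Limsup_bounded)
  define Q where "Q = 20 * T + 1 - 2 * L"
  define C0 where "C0 = ln (32 * T + 2) + ln 2 + 17 + \<alpha>"
  have C0: "C0 > 0" unfolding C0_def using T \<alpha> by (smt (verit) ln_ge_zero)
  have ev: "eventually (\<lambda>N. 1 \<le> real N \<and> (\<bar>Q\<bar> + 1) / T \<le> real N \<and> C0 powr (1/\<alpha>) \<le> real N) sequentially"
    by (intro eventually_conj ev_real_ge)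
  show "eventually (\<lambda>N. ereal (1 / real N powr (1 + \<alpha>)) * ln_ereal (height_prob \<alpha> T \<rho>m \<rho>p y0 N (\<eta> N) L)
     \<le> ereal (20 * T + 1 - 2 * L)) sequentially"
    using ev
  proof eventually_elim
    case (elim N)
    define n where "n = real N"
    have n: "1 \<le> n" using elim unfolding n_def by simp
    have N1: "N \<ge> 1" using n unfolding n_def by simp
    have npos: "n > 0" using n by simp
    have nQ: "n * T \<ge> \<bar>Q\<bar> + 1" using elim T unfolding n_def by (simp add: pos_divide_le_eq)
    have nC: "n powr \<alpha> \<ge> C0"
    proof -
      have "(C0 powr (1/\<alpha>)) powr \<alpha> \<le> n powr \<alpha>"
        using elim \<alpha> unfolding n_def by (intro powr_mono2) auto
      also have "(C0 powr (1/\<alpha>)) powr \<alpha> = C0" using C0 \<alpha> by (simp add: powr_powr)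
      finally show ?thesis .
    qed
    define P where "P = n powr (1 + \<alpha>)"
    have P: "P > 0" unfolding P_def using npos by simp
    define R where "R = total_rate \<alpha> N"
    have Rdef: "R = n powr (2 + \<alpha>) * (2 * n + 2)" unfolding R_def total_rate_def n_def by simp
    define K where "K = nat \<lceil>4 * R * T\<rceil>"
    have R0: "R > 0" unfolding R_def using rate_pos[OF N1] .
    have K1: "4 * R * T \<le> real K" unfolding K_def using real_nat_ceiling_ge by blast
    have K2: "real K \<le> 4 * R * T + 1"
    proof -
      have "0 \<le> 4 * R * T" using R0 T by simp
      then have "real K = real_of_int \<lceil>4 * R * T\<rceil>" unfolding K_def by simp
      then show ?thesis by linarith
    qed
    define \<theta> where "\<theta> = 1 / n"
    have th: "0 \<le> \<theta>" "\<theta> \<le> 1" unfolding \<theta>_def using n by auto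
    define B where "B = (2 * n + 2) * (L * P - (2 * n + 1))"
    have hp: "height_prob \<alpha> T \<rho>m \<rho>p y0 N (\<eta> N) L \<le> Bnd \<theta> B N R T K (0, \<eta> N, \<lambda>_. 0)"
      unfolding R_def by (rule prob_le_Bnd[OF N1 y0 th]) (simp add: B_def P_def n_def)
    have "Bnd \<theta> B N R T K (0, \<eta> N, \<lambda>_. 0) =
       (\<Sum>j<K. exp ((1/n) / (2 * n + 2) + (1/n)^2) ^ j) * (2 * exp (- ((1/n) * ((2 * n + 2) * (L * n powr (1 + \<alpha>) - (2 * n + 1))))))
        + (1/2)^K * exp ((n powr (2 + \<alpha>) * (2 * n + 2)) * T)"
      unfolding Bnd_def gst_def gS_def est_def cc_def Ssum_def Rdef B_def P_def \<theta>_def n_def by simp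
    also have "\<dots> \<le> exp (n powr (1 + \<alpha>) * (20 * T + 1 - 2 * L))"
      by (rule asym_main[OF \<alpha> T L n]) (use nQ nC K1 K2 in \<open>simp_all add: Q_def C0_def Rdef\<close>)
    finally have hpB: "height_prob \<alpha> T \<rho>m \<rho>p y0 N (\<eta> N) L \<le> exp (P * Q)"
      using hp unfolding P_def Q_def by linarith
    show ?case
    proof (cases "height_prob \<alpha> T \<rho>m \<rho>p y0 N (\<eta> N) L > 0")
      case True
      have "ln (height_prob \<alpha> T \<rho>m \<rho>p y0 N (\<eta> N) L) \<le> P * Q"
        using True hpB by (metis ln_exp ln_le_cancel_iff exp_gt_zero)
      then have "ln (height_prob \<alpha> T \<rho>m \<rho>p y0 N (\<eta> N) L) / P \<le> Q"
        using P by (simp add: pos_divide_le_eq mult.commute)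
      then show ?thesis using True unfolding ln_ereal_def Q_def P_def n_def by simp
    next
      case False
      have "ereal (1 / real N powr (1 + \<alpha>)) * ln_ereal (height_prob \<alpha> T \<rho>m \<rho>p y0 N (\<eta> N) L) = - \<infinity>"
        using False P unfolding ln_ereal_def P_def n_def by simp
      then show ?thesis by simp
    qed
  qed
qed

theorem proposition9p1:
  fixes \<alpha> T a y0 :: real and \<rho>m \<rho>p :: "real \<Rightarrow> real" and \<eta> :: "nat \<Rightarrow> config"
  assumes "\<alpha> > 0" and "T > 0" and "0 < a" and "a < 1/2"
    and "\<rho>m C1_differentiable_on {0..T}" and "\<rho>p C1_differentiable_on {0..T}"
    and "\<forall>t\<in>{0..T}. a \<le> \<rho>m t \<and> \<rho>m t \<le> 1 - a"
    and "\<forall>t\<in>{0..T}. a \<le> \<rho>p t \<and> \<rho>p t \<le> 1 - a"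
    and "-1 \<le> y0" and "y0 \<le> 1"
  shows "((\<lambda>L. limsup (\<lambda>N. ereal (1 / real N powr (1 + \<alpha>))
                   * ln_ereal (height_prob \<alpha> T \<rho>m \<rho>p y0 N (\<eta> N) L)))
          \<longlongrightarrow> -\<infinity>) at_top"
  unfolding tendsto_MInfty
proof
  fix r :: real
  have "eventually (\<lambda>L. max 0 ((20 * T + 2 - r) / 2) \<le> L) at_top" by (rule eventually_ge_at_top)
  then show "eventually (\<lambda>L. limsup (\<lambda>N. ereal (1 / real N powr (1 + \<alpha>))
                   * ln_ereal (height_prob \<alpha> T \<rho>m \<rho>p y0 N (\<eta> N) L)) < ereal r) at_top"
  proof eventually_elim
    case (elim L)
    then have L: "L \<ge> 0" and Lr: "20 * T + 1 - 2 * L < r" by auto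
    have "limsup (\<lambda>N. ereal (1 / real N powr (1 + \<alpha>)) * ln_ereal (height_prob \<alpha> T \<rho>m \<rho>p y0 N (\<eta> N) L))
       \<le> ereal (20 * T + 1 - 2 * L)"
      by (rule bound_fixed_L) (use assms L in auto)
    also have "\<dots> < ereal r" using Lr by simp
    finally show ?case .
  qed
qed


end
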